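(* Let $m,n\in\mathbb{N}$ and $\epsilon>0$. Let $\Gamma\subseteq\mathbb{Z}_n$ and let $f:\mathbb{Z}_n\to\mathbb{C}$ be a $|\Gamma|$-sparse function of the form $f(x)=\sum_{\alpha\in\Gamma}\widehat f(\alpha)\chi_\alpha(x)$. Let $\ell:=\min(n,m)$ and let $g:\mathbb{Z}_m\to\mathbb{C}$ be defined by $g(x)=f(x)$ for $0\le x<\ell$ and $g(x)=0$ otherwise. Let $r=|\Gamma|\,\|f\|_2^2/(2\epsilon)$ and $\Gamma'=\bigcup_{\alpha\in\Gamma}\{\beta\in\mathbb{Z}_m:|\frac mn\alpha-\beta|_m\le r+1\}$. Then $\|g-g|_{\Gamma'}\|_2^2\le\epsilon$.
   Context: $\mathbb{Z}_n=\{0,\dots,n-1\}$ with addition mod $n$; elements are treated as these integer representatives. For $h:\mathbb{Z}_n\to\mathbb{C}$: $\langle h_1,h_2\rangle=\frac1n\sum_x h_1(x)\overline{h_2(x)}$, $\|h\|_2^2=\langle h,h\rangle$, $\chi_\alpha(x)=\exp(2\pi i\alpha x/n)$, $\widehat h(\alpha)=\langle h,\chi_\alpha\rangle$; analogously on $\mathbb{Z}_m$ with $m$ in place of $n$. For $\Gamma'\subseteq\mathbb{Z}_m$ and $h:\mathbb{Z}_m\to\mathbb{C}$, $h|_{\Gamma'}=\sum_{\beta\in\Gamma'}\widehat h(\beta)\chi_{\beta,m}$. For $k\in\mathbb{N}$, $x\in\mathbb{R}$: $|x|_k=\min\{|x-kz|:z\in\mathbb{Z}\}$. *)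

theory Defs
  imports Complex_Main
begin

text \<open>Z_n is represented by the natural numbers 0..<n; functions Z_n -> C are
  functions nat => complex of which only the values on {0..<n} matter.\<close>

definition inner_Z :: "nat \<Rightarrow> (nat \<Rightarrow> complex) \<Rightarrow> (nat \<Rightarrow> complex) \<Rightarrow> complex" where
  "inner_Z n h1 h2 = (\<Sum>x<n. h1 x * cnj (h2 x)) / of_nat n"

definition norm2sq_Z :: "nat \<Rightarrow> (nat \<Rightarrow> complex) \<Rightarrow> real" where
  "norm2sq_Z n h = (\<Sum>x<n. (cmod (h x))^2) / real n"

definition chi :: "nat \<Rightarrow> nat \<Rightarrow> nat \<Rightarrow> complex" where
  "chi n \<alpha> x = exp (2 * of_real pi * \<i> * of_nat \<alpha> * of_nat x / of_nat n)"

definition fourier :: "nat \<Rightarrow> (nat \<Rightarrow> complex) \<Rightarrow> nat \<Rightarrow> complex" where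
  "fourier n h \<alpha> = inner_Z n h (chi n \<alpha>)"

definition restrict_freq :: "nat \<Rightarrow> nat set \<Rightarrow> (nat \<Rightarrow> complex) \<Rightarrow> nat \<Rightarrow> complex" where
  "restrict_freq m \<Gamma>' h x = (\<Sum>\<beta>\<in>\<Gamma>'. fourier m h \<beta> * chi m \<beta> x)"

definition dist_mod :: "nat \<Rightarrow> real \<Rightarrow> real" where
  "dist_mod k x = Inf {\<bar>x - real k * of_int z\<bar> | z. True}"

end

theory Submission
  imports Defs "HOL-Analysis.Analysis"
begin

lemma jordan:
  fixes x :: real assumes "0 \<le> x" "x \<le> pi/2" shows "2/pi * x \<le> sin x"
proof -
  have conv: "convex_on {0..pi/2} (\<lambda>x. - sin x)"
  proof (rule convex_on_realI[where f' = "\<lambda>x. - cos x"])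
    show "connected {0..pi/2::real}" by simp
    show "((\<lambda>x. - sin x) has_real_derivative - cos x) (at x)" for x
      by (auto intro!: derivative_eq_intros)
    show "- cos x \<le> - cos y" if "x \<in> {0..pi/2}" "y \<in> {0..pi/2}" "x \<le> y" for x y
      using that cos_mono_le_eq[of y x] by auto
  qed
  define t where "t = 2/pi * x"
  have t0: "0 \<le> t" "t \<le> 1" using assms pi_gt_zero by (auto simp: t_def field_simps)
  have "(\<lambda>x. - sin x) ((1 - t) *\<^sub>R 0 + t *\<^sub>R (pi/2)) \<le> (1 - t) * (- sin 0) + t * (- sin (pi/2))"
    by (rule convex_onD[OF conv]) (use t0 in auto)
  moreover have "(1 - t) *\<^sub>R 0 + t *\<^sub>R (pi/2) = x" by (simp add: t_def)
  ultimately show ?thesis by (simp add: t_def)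
qed

lemma abs_sin_pi:
  fixes u :: real assumes "\<bar>u\<bar> \<le> 1/2" shows "2 * \<bar>u\<bar> \<le> \<bar>sin (pi * u)\<bar>"
proof (cases "u \<ge> 0")
  case True
  have "2/pi * (pi*u) \<le> sin (pi*u)" using True assms by (intro jordan) auto
  then show ?thesis using True by simp
next
  case False
  have a: "0 \<le> pi*(-u)" using False pi_gt_zero by (simp add: mult_nonneg_nonpos)
  have b: "pi*(-u) \<le> pi/2" using assms False pi_gt_zero
    by (metis abs_of_neg mult_left_mono not_le order_less_imp_le times_divide_eq_right mult_1_right)
  have "2/pi * (pi*(-u)) \<le> sin (pi*(-u))" using a b by (intro jordan)
  then show ?thesis using False by simp
qed

lemma cmod_cis_minus1:
  fixes u :: real assumes "\<bar>u\<bar> \<le> 1/2" shows "4 * \<bar>u\<bar> \<le> cmod (cis (2*pi*u) - 1)"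
proof -
  have "(cmod (cis (2*pi*u) - 1))^2 = (cos (2*pi*u) - 1)^2 + (sin (2*pi*u))^2"
    by (simp add: cmod_def)
  also have "\<dots> = 2 - 2 * cos (2*(pi*u))" by (simp add: power2_eq_square algebra_simps)
  also have "\<dots> = 4 * (sin (pi*u))^2" by (simp add: cos_double_sin)
  also have "\<dots> = (2 * \<bar>sin (pi*u)\<bar>)^2" by (simp add: power2_eq_square)
  finally have eq: "cmod (cis (2*pi*u) - 1) = 2 * \<bar>sin (pi*u)\<bar>"
    by (metis abs_ge_zero norm_ge_zero power2_eq_imp_eq zero_le_mult_iff zero_le_numeral)
  show ?thesis using abs_sin_pi[OF assms] eq by simp
qed

lemma geo_bound:
  fixes u :: real assumes "\<bar>u\<bar> \<le> 1/2" "u \<noteq> 0"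
  shows "cmod (\<Sum>x<l. cis (2*pi*u) ^ x) \<le> 1 / (2 * \<bar>u\<bar>)"
proof -
  let ?w = "cis (2*pi*u)"
  have lb: "4 * \<bar>u\<bar> \<le> cmod (?w - 1)" by (rule cmod_cis_minus1[OF assms(1)])
  have pos: "0 < 4 * \<bar>u\<bar>" using assms by simp
  hence ne: "?w \<noteq> 1" using lb by auto
  have "(\<Sum>x<l. ?w ^ x) = (?w ^ l - 1) / (?w - 1)" by (rule geometric_sum[OF ne])
  hence "cmod (\<Sum>x<l. ?w ^ x) = cmod (?w ^ l - 1) / cmod (?w - 1)" by (simp add: norm_divide)
  also have "\<dots> \<le> 2 / (4 * \<bar>u\<bar>)"
  proof (rule frac_le)
    show "cmod (?w ^ l - 1) \<le> 2"
      using norm_triangle_ineq4[of "?w ^ l" 1] by (simp add: norm_power)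
  qed (use lb pos in auto)
  finally show ?thesis by simp
qed

lemma chi_cis: "chi n a x = cis (2*pi*real a*real x/real n)"
  by (simp add: chi_def cis_conv_exp mult_ac)

lemma chi_sym: "chi n a x = chi n x a"
  by (simp add: chi_def mult_ac)

lemma cis_eq_1_int: assumes "cis a = 1" shows "\<exists>k::int. a = 2*pi* of_int k"
proof -
  have "exp (\<i> * complex_of_real a) = 1" using assms by (simp add: cis_conv_exp)
  then obtain k::int where "Im (\<i> * complex_of_real a) = of_int (2*k) * pi"
    unfolding exp_eq_1 by blast
  then show ?thesis by (intro exI[of _ k]) simp
qed

lemma chi_prod: "chi m b x * cnj (chi m c x) = cis (2*pi*(real b - real c)/real m) ^ x"
  unfolding chi_cis cis_cnj cis_mult Complex.DeMoivre
  by (rule arg_cong[where f=cis]) (cases "m = 0", simp_all add: field_simps)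

lemma chi_orth:
  assumes "m > 0" "b < m" "c < m"
  shows "(\<Sum>x<m. chi m b x * cnj (chi m c x)) = (if b = c then of_nat m else 0)"
proof (cases "b = c")
  case True
  then show ?thesis by (simp add: chi_prod)
next
  case False
  let ?w = "cis (2*pi*(real b - real c)/real m)"
  have ne: "?w \<noteq> 1"
  proof
    assume "?w = 1"
    then obtain k::int where k: "2*pi*(real b - real c)/real m = 2*pi* of_int k"
      using cis_eq_1_int by blast
    hence "2*pi*((real b - real c) - real m * of_int k) = 0" using assms(1) by (simp add: field_simps)
    hence "real b - real c = real m * of_int k" by (simp add: pi_neq_zero)
    hence e: "int b - int c = int m * k" by (metis of_int_eq_iff of_int_mult of_int_diff of_int_of_nat_eq)
    consider "k = 0" | "k \<ge> 1" | "k \<le> -1" by linarith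
    thus False
    proof cases
      case 1 thus False using e False by simp
    next
      case 2 hence "int m * k \<ge> int m" using mult_left_mono[of 1 k "int m"] by simp
      thus False using e assms by linarith
    next
      case 3 hence "int m * k \<le> - int m" using mult_left_mono[of k "-1" "int m"] by simp
      thus False using e assms by linarith
    qed
  qed
  have wm: "?w ^ m = 1"
  proof -
    have "?w ^ m = cis (2*pi* of_int (int b - int c))"
      unfolding Complex.DeMoivre using assms(1) by (intro arg_cong[where f=cis]) (simp add: field_simps)
    also have "\<dots> = 1" by (rule cis_multiple_2pi) simp
    finally show ?thesis .
  qed
  have "(\<Sum>x<m. chi m b x * cnj (chi m c x)) = (\<Sum>x<m. ?w ^ x)" by (simp add: chi_prod)
  also have "\<dots> = 0" using geometric_sum[OF ne, of m] wm by simp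
  finally show ?thesis using False by simp
qed

lemma parseval_sum:
  assumes "m > 0" "B \<subseteq> {0..<m}"
  shows "norm2sq_Z m (\<lambda>x. \<Sum>b\<in>B. c b * chi m b x) = (\<Sum>b\<in>B. (cmod (c b))^2)"
proof -
  have fin: "finite B" using assms(2) finite_subset by blast
  have "complex_of_real (\<Sum>x<m. (cmod (\<Sum>b\<in>B. c b * chi m b x))^2)
     = (\<Sum>x<m. (\<Sum>b\<in>B. c b * chi m b x) * cnj (\<Sum>b\<in>B. c b * chi m b x))"
    by (simp only: of_real_sum complex_norm_square)
  also have "\<dots> = (\<Sum>x<m. \<Sum>b\<in>B. \<Sum>d\<in>B. c b * cnj (c d) * (chi m b x * cnj (chi m d x)))"
  proof (rule sum.cong[OF refl])
    fix x
    have "(\<Sum>b\<in>B. c b * chi m b x) * cnj (\<Sum>b\<in>B. c b * chi m b x)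
       = (\<Sum>b\<in>B. c b * chi m b x) * (\<Sum>d\<in>B. cnj (c d) * cnj (chi m d x))"
      by (simp only: cnj_sum complex_cnj_mult)
    also have "\<dots> = (\<Sum>b\<in>B. \<Sum>d\<in>B. (c b * chi m b x) * (cnj (c d) * cnj (chi m d x)))"
      by (rule sum_product)
    also have "\<dots> = (\<Sum>b\<in>B. \<Sum>d\<in>B. c b * cnj (c d) * (chi m b x * cnj (chi m d x)))"
      by (intro sum.cong refl) (simp only: mult_ac)
    finally show "(\<Sum>b\<in>B. c b * chi m b x) * cnj (\<Sum>b\<in>B. c b * chi m b x)
       = (\<Sum>b\<in>B. \<Sum>d\<in>B. c b * cnj (c d) * (chi m b x * cnj (chi m d x)))" .
  qed
  also have "\<dots> = (\<Sum>b\<in>B. \<Sum>x<m. \<Sum>d\<in>B. c b * cnj (c d) * (chi m b x * cnj (chi m d x)))"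
    by (rule sum.swap)
  also have "\<dots> = (\<Sum>b\<in>B. \<Sum>d\<in>B. \<Sum>x<m. c b * cnj (c d) * (chi m b x * cnj (chi m d x)))"
    by (intro sum.cong refl sum.swap)
  also have "\<dots> = (\<Sum>b\<in>B. \<Sum>d\<in>B. c b * cnj (c d) * (\<Sum>x<m. chi m b x * cnj (chi m d x)))"
    by (intro sum.cong refl) (simp only: sum_distrib_left)
  also have "\<dots> = (\<Sum>b\<in>B. \<Sum>d\<in>B. c b * cnj (c d) * (if b = d then of_nat m else 0))"
    using assms by (intro sum.cong refl) (subst chi_orth, auto)
  also have "\<dots> = (\<Sum>b\<in>B. \<Sum>d\<in>B. if b = d then c b * cnj (c d) * of_nat m else 0)"
    by (intro sum.cong refl) simp
  also have "\<dots> = (\<Sum>b\<in>B. c b * cnj (c b) * of_nat m)"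
    using fin by (intro sum.cong refl) (simp add: sum.delta)
  also have "\<dots> = (\<Sum>b\<in>B. complex_of_real (real m * (cmod (c b))^2))"
    by (intro sum.cong refl) (simp only: complex_norm_square of_real_mult of_real_of_nat_eq mult_ac)
  also have "\<dots> = complex_of_real (real m * (\<Sum>b\<in>B. (cmod (c b))^2))"
    by (simp only: of_real_sum sum_distrib_left)
  finally have "(\<Sum>x<m. (cmod (\<Sum>b\<in>B. c b * chi m b x))^2) = real m * (\<Sum>b\<in>B. (cmod (c b))^2)"
    using of_real_eq_iff by blast
  thus ?thesis using assms(1) by (simp add: norm2sq_Z_def)
qed

lemma inversion:
  assumes "m > 0" "x < m"
  shows "h x = (\<Sum>b<m. fourier m h b * chi m b x)"
proof -
  have "(\<Sum>b<m. fourier m h b * chi m b x)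
      = (\<Sum>b<m. (\<Sum>y<m. h y * (chi m x b * cnj (chi m y b))) / of_nat m)"
  proof (intro sum.cong refl)
    fix b
    have "fourier m h b * chi m b x = (\<Sum>y<m. h y * cnj (chi m b y)) * chi m b x / of_nat m"
      by (simp add: fourier_def inner_Z_def)
    also have "\<dots> = (\<Sum>y<m. h y * cnj (chi m b y) * chi m b x) / of_nat m"
      by (simp only: sum_distrib_right)
    also have "\<dots> = (\<Sum>y<m. h y * (chi m x b * cnj (chi m y b))) / of_nat m"
    proof -
      have "h y * cnj (chi m b y) * chi m b x = h y * (chi m x b * cnj (chi m y b))" for y
        using chi_sym[of m b x] chi_sym[of m b y] by (simp only: mult_ac)
      hence "(\<Sum>y<m. h y * cnj (chi m b y) * chi m b x) = (\<Sum>y<m. h y * (chi m x b * cnj (chi m y b)))"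
        by (intro sum.cong refl)
      thus ?thesis by (simp only:)
    qed
    finally show "fourier m h b * chi m b x = (\<Sum>y<m. h y * (chi m x b * cnj (chi m y b))) / of_nat m" .
  qed
  also have "\<dots> = (\<Sum>b<m. \<Sum>y<m. h y * (chi m x b * cnj (chi m y b))) / of_nat m"
    by (simp only: sum_divide_distrib)
  also have "\<dots> = (\<Sum>y<m. h y * (\<Sum>b<m. chi m x b * cnj (chi m y b))) / of_nat m"
    by (subst sum.swap) (simp only: sum_distrib_left)
  also have "\<dots> = (\<Sum>y<m. if x = y then h y * of_nat m else 0) / of_nat m"
    using assms by (intro arg_cong2[where f="(/)"] sum.cong refl) (subst chi_orth, auto)
  also have "\<dots> = h x" using assms by (simp add: sum.delta)
  finally show ?thesis by simp
qed

lemma dist_mod_min: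
  assumes "m > 0"
  shows "dist_mod m x = \<bar>x - real m * of_int \<lfloor>x / real m + 1/2\<rfloor>\<bar>"
    and "\<bar>x - real m * of_int \<lfloor>x / real m + 1/2\<rfloor>\<bar> \<le> real m / 2"
proof -
  define z0 where "z0 = \<lfloor>x / real m + 1/2\<rfloor>"
  define y where "y = x - real m * of_int z0"
  have mpos: "real m > 0" using assms by simp
  have f1: "of_int z0 \<le> x / real m + 1/2" unfolding z0_def by (rule of_int_floor_le)
  have f2: "x / real m + 1/2 < of_int z0 + 1" unfolding z0_def by (rule real_of_int_floor_add_one_gt)
  have "real m * of_int z0 \<le> real m * (x / real m + 1/2)" using f1 mpos by (intro mult_left_mono) auto
  moreover have e: "real m * (x / real m + 1/2) = x + real m / 2" using mpos by (simp add: field_simps)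
  ultimately have y1: "- (real m / 2) \<le> y" by (simp add: y_def)
  have "real m * (x / real m + 1/2) < real m * (of_int z0 + 1)" using f2 mpos by (intro mult_strict_left_mono) auto
  hence y2: "y < real m / 2" using e by (simp add: y_def algebra_simps)
  have yb: "\<bar>y\<bar> \<le> real m / 2" using y1 y2 by linarith
  have min: "\<bar>y\<bar> \<le> \<bar>x - real m * of_int z\<bar>" for z :: int
  proof -
    have eq: "x - real m * of_int z = y - real m * of_int (z - z0)" by (simp add: y_def algebra_simps)
    consider "z - z0 = 0" | "z - z0 \<ge> 1" | "z - z0 \<le> -1" by linarith
    thus ?thesis
    proof cases
      case 1 thus ?thesis using eq by simp
    next
      case 2
      hence "real m * of_int (z - z0) \<ge> real m" using mpos
        by (metis mult_cancel_left1 mult_left_mono of_int_1_le_iff order_less_imp_le)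
      thus ?thesis using eq yb by linarith
    next
      case 3
      hence "of_int (z - z0) \<le> (-1::real)" by (metis of_int_le_iff of_int_minus of_int_1)
      hence "real m * of_int (z - z0) \<le> real m * (-1)" using mpos by (intro mult_left_mono) auto
      thus ?thesis using eq yb by linarith
    qed
  qed
  have "Inf {\<bar>x - real m * of_int z\<bar> | z. True} = \<bar>y\<bar>"
  proof (rule cInf_eq_minimum)
    show "\<bar>y\<bar> \<in> {\<bar>x - real m * of_int z\<bar> | z. True}" unfolding y_def by blast
    show "\<bar>y\<bar> \<le> w" if "w \<in> {\<bar>x - real m * of_int z\<bar> | z. True}" for w
      using that min by auto
  qed
  thus "dist_mod m x = \<bar>x - real m * of_int \<lfloor>x / real m + 1/2\<rfloor>\<bar>"
    by (simp add: dist_mod_def y_def z0_def)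
  show "\<bar>x - real m * of_int \<lfloor>x / real m + 1/2\<rfloor>\<bar> \<le> real m / 2" using yb by (simp add: y_def z0_def)
qed

lemma tail_one_side:
  fixes S :: "int set" and t R :: real
  assumes "finite S" "R \<ge> 1" "\<forall>b\<in>S. of_int b - t > R"
  shows "(\<Sum>b\<in>S. 1 / (of_int b - t)^2) \<le> 1 / (R - 1/2)"
proof -
  define b0 where "b0 = \<lceil>t + R\<rceil>"
  have b0ge: "of_int b0 \<ge> t + R" unfolding b0_def by (rule le_of_int_ceiling)
  have bge: "b \<ge> b0" if "b \<in> S" for b
  proof -
    have "of_int b \<ge> t + R" using assms(3) that by force
    thus ?thesis unfolding b0_def by (simp add: ceiling_le_iff)
  qed
  define K where "K = (\<lambda>b. nat (b - b0)) ` S"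
  have finK: "finite K" using assms(1) by (simp add: K_def)
  then obtain N where N: "\<forall>k\<in>K. k < N" using finite_nat_set_iff_bounded by blast
  have SK: "S = (\<lambda>k. b0 + int k) ` K" unfolding K_def
    using bge by (force simp: image_image)
  define f where "f = (\<lambda>b::int. 1 / (of_int b - t)^2)"
  have "(\<Sum>b\<in>S. f b) = (\<Sum>k\<in>K. f (b0 + int k))"
    unfolding SK by (subst sum.reindex) (auto simp: inj_on_def)
  also have "\<dots> \<le> (\<Sum>k<N. f (b0 + int k))"
    using N by (intro sum_mono2) (auto simp: f_def)
  also have "\<dots> \<le> (\<Sum>k<N. 1/(of_int b0 + real k - t - 1/2) - 1/(of_int b0 + real (Suc k) - t - 1/2))"
  proof (intro sum_mono)
    fix k assume "k \<in> {..<N}"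
    define a where "a = of_int b0 + real k - t"
    have a1: "a \<ge> 1" using b0ge assms(2) by (simp add: a_def)
    have eq1: "1/(a - 1/2) - 1/(a + 1/2) = 1/(a^2 - 1/4)" using a1 by (simp add: field_simps power2_eq_square)
    have aa: "a*a \<ge> 1*1" using a1 by (intro mult_mono) auto
    moreover have "1 / a^2 \<le> 1/(a^2 - 1/4)" using aa by (intro divide_left_mono) (auto intro!: mult_pos_pos simp: power2_eq_square)
    ultimately have "1 / a^2 \<le> 1/(a - 1/2) - 1/(a + 1/2)" using eq1 by simp
    thus "f (b0 + int k) \<le> 1/(of_int b0 + real k - t - 1/2) - 1/(of_int b0 + real (Suc k) - t - 1/2)"
      by (simp add: f_def a_def algebra_simps)
  qed
  also have "\<dots> = 1/(of_int b0 + real 0 - t - 1/2) - 1/(of_int b0 + real N - t - 1/2)"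
    by (rule sum_lessThan_telescope'[where f = "\<lambda>k. 1/(of_int b0 + real k - t - 1/2)"])
  also have "\<dots> \<le> 1/(of_int b0 - t - 1/2)"
    using b0ge assms(2) by simp
  also have "\<dots> \<le> 1 / (R - 1/2)"
    using b0ge assms(2) by (intro divide_left_mono) auto
  finally show ?thesis by (simp add: f_def)
qed

lemma beta_sum:
  fixes t R :: real
  assumes "m > 0" "R \<ge> 1" "B \<subseteq> {0..<m}" "\<forall>b\<in>B. dist_mod m (t - real b) > R"
  shows "(\<Sum>b\<in>B. 1/(4*(dist_mod m (t - real b))^2)) \<le> 1/(2*R - 1)"
proof -
  define zz where "zz = (\<lambda>b::nat. \<lfloor>(t - real b) / real m + 1/2\<rfloor>)"
  define bb where "bb = (\<lambda>b::nat. int b + int m * zz b)"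
  have d: "dist_mod m (t - real b) = \<bar>t - of_int (bb b)\<bar>" for b
  proof -
    have "of_int (bb b) = real b + real m * of_int (zz b)" by (simp add: bb_def)
    hence "t - of_int (bb b) = (t - real b) - real m * of_int \<lfloor>(t - real b) / real m + 1/2\<rfloor>"
      by (simp add: zz_def)
    thus ?thesis using dist_mod_min(1)[OF assms(1), of "t - real b"] by simp
  qed
  have bbmod: "bb x mod int m = int x" if "x < m" for x
  proof -
    have "bb x mod int m = int x mod int m" unfolding bb_def by (rule mod_mult_self2)
    also have "\<dots> = int x" using that by simp
    finally show ?thesis .
  qed
  have inj: "inj_on bb B"
  proof (rule inj_onI)
    fix x y assume xy: "x \<in> B" "y \<in> B" "bb x = bb y"
    have xm: "x < m" "y < m" using xy assms(3) by auto
    have "int x = bb x mod int m" using bbmod[OF xm(1)] by simp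
    also have "\<dots> = bb y mod int m" using xy(3) by simp
    also have "\<dots> = int y" using bbmod[OF xm(2)] by simp
    finally have "int x = int y" .
    thus "x = y" by simp
  qed
  define g where "g = (\<lambda>b::int. (1/4) * (1 / (of_int b - t)^2))"
  have "(\<Sum>b\<in>B. 1/(4*(dist_mod m (t - real b))^2)) = (\<Sum>b\<in>B. g (bb b))"
  proof (intro sum.cong refl)
    fix b
    have "(dist_mod m (t - real b))^2 = (of_int (bb b) - t)^2"
      unfolding d power2_abs by (rule power2_commute)
    thus "1/(4*(dist_mod m (t - real b))^2) = g (bb b)" by (simp add: g_def)
  qed
  also have "\<dots> = (\<Sum>b\<in>bb ` B. g b)" using inj by (rule sum.reindex[symmetric, unfolded comp_def])
  finally have e1: "(\<Sum>b\<in>B. 1/(4*(dist_mod m (t - real b))^2)) = (\<Sum>b\<in>bb ` B. g b)" .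
  define S where "S = bb ` B"
  have finS: "finite S" unfolding S_def using assms(3) finite_subset by blast
  have Sd: "\<bar>t - of_int b\<bar> > R" if "b \<in> S" for b
    using that assms(4) d unfolding S_def by auto
  have "(\<Sum>b\<in>S. g b) = (\<Sum>b\<in>S \<inter> {b. of_int b > t}. g b) + (\<Sum>b\<in>S - {b. of_int b > t}. g b)"
    using finS by (rule sum.Int_Diff)
  also have "(\<Sum>b\<in>S \<inter> {b. of_int b > t}. g b) \<le> (1/4) * (1 / (R - 1/2))"
  proof -
    have "(\<Sum>b\<in>S \<inter> {b. of_int b > t}. 1 / (of_int b - t)^2) \<le> 1 / (R - 1/2)"
    proof (rule tail_one_side)
      show "finite (S \<inter> {b. of_int b > t})" using finS by simp
      show "\<forall>b\<in>S \<inter> {b. of_int b > t}. of_int b - t > R" using Sd by force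
    qed (use assms(2) in auto)
    hence "(1/4) * (\<Sum>b\<in>S \<inter> {b. of_int b > t}. 1 / (of_int b - t)^2) \<le> (1/4) * (1 / (R - 1/2))"
      by (rule mult_left_mono) auto
    thus ?thesis unfolding g_def sum_distrib_left .
  qed
  also have "(\<Sum>b\<in>S - {b. of_int b > t}. g b) \<le> (1/4) * (1 / (R - 1/2))"
  proof -
    let ?S2 = "S - {b. of_int b > t}"
    have "(\<Sum>b\<in>uminus ` ?S2. g (- b)) = (\<Sum>b\<in>?S2. g (- (- b)))"
      by (rule sum.reindex[unfolded comp_def]) (simp add: inj_on_def)
    hence r: "(\<Sum>b\<in>?S2. g b) = (\<Sum>b\<in>uminus ` ?S2. g (- b))" by simp
    have gm: "g (- b) = (1/4) * (1 / (of_int b - (-t))^2)" for b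
    proof -
      have "(of_int (- b) - t)^2 = (of_int b - (-t))^2"
        by (simp add: power2_eq_square algebra_simps)
      thus ?thesis by (simp add: g_def)
    qed
    have "(\<Sum>b\<in>uminus ` ?S2. 1 / (of_int b - (-t))^2) \<le> 1 / (R - 1/2)"
    proof (rule tail_one_side)
      show "finite (uminus ` ?S2)" using finS by simp
      show "\<forall>b\<in>uminus ` ?S2. of_int b - (-t) > R" using Sd by force
    qed (use assms(2) in auto)
    hence "(1/4) * (\<Sum>b\<in>uminus ` ?S2. 1 / (of_int b - (-t))^2) \<le> (1/4) * (1 / (R - 1/2))"
      by (rule mult_left_mono) auto
    thus ?thesis unfolding r gm sum_distrib_left .
  qed
  finally have "(\<Sum>b\<in>S. g b) \<le> (1/4) * (1 / (R - 1/2)) + (1/4) * (1 / (R - 1/2))" by simp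
  also have "\<dots> = 1/(2*R - 1)" using assms(2) by (simp add: field_simps)
  finally show ?thesis using e1 S_def by simp
qed

lemma coef_bound:
  assumes "m > 0" "n > 0" "dist_mod m (real m / real n * real a - real b) > 0"
  shows "cmod ((\<Sum>x<l. chi n a x * cnj (chi m b x)) / of_nat m)
           \<le> 1 / (2 * dist_mod m (real m / real n * real a - real b))"
proof -
  define X where "X = real m / real n * real a - real b"
  define z where "z = \<lfloor>X / real m + 1/2\<rfloor>"
  define u where "u = (X - real m * of_int z) / real m"
  have mpos: "real m > 0" using assms by simp
  have npos: "real n > 0" using assms by simp
  have mu: "X - real m * of_int z = real m * u" using mpos by (simp add: u_def)
  have dX: "dist_mod m X = real m * \<bar>u\<bar>"
  proof -
    have "dist_mod m X = \<bar>X - real m * of_int z\<bar>" using dist_mod_min(1)[OF assms(1), of X] by (simp add: z_def)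
    also have "\<dots> = real m * \<bar>u\<bar>" unfolding mu using mpos by (simp add: abs_mult)
    finally show ?thesis .
  qed
  have "real m * \<bar>u\<bar> \<le> real m * (1/2)"
    using dist_mod_min(2)[OF assms(1), of X] unfolding z_def[symmetric] mu using mpos by (simp add: abs_mult)
  hence u2: "\<bar>u\<bar> \<le> 1/2" using mpos by (rule mult_left_le_imp_le)
  have u0: "u \<noteq> 0" using assms(3) dX by (auto simp: X_def)
  have w: "cis (2*pi*(real a / real n - real b / real m)) = cis (2*pi*u)"
  proof -
    have xm: "X / real m = real a / real n - real b / real m"
      using mpos npos by (simp add: X_def diff_divide_distrib)
    have "u = X / real m - of_int z" using mpos by (simp add: u_def diff_divide_distrib)
    hence e: "real a / real n - real b / real m = u + of_int z" using xm by simp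
    hence "2*pi*(real a / real n - real b / real m) = 2*pi*u + 2*pi* of_int z"
      by (simp only: distrib_left)
    hence "cis (2*pi*(real a / real n - real b / real m)) = cis (2*pi*u) * cis (2*pi* of_int z)"
      by (simp only: cis_mult)
    also have "cis (2*pi* of_int z) = 1" by (rule cis_multiple_2pi) simp
    finally show ?thesis by simp
  qed
  have p: "chi n a x * cnj (chi m b x) = cis (2*pi*u) ^ x" for x
  proof -
    have "chi n a x * cnj (chi m b x) = cis (2*pi*(real a / real n - real b / real m)) ^ x"
      unfolding chi_cis cis_cnj cis_mult Complex.DeMoivre
      using mpos npos by (intro arg_cong[where f=cis]) (simp add: field_simps)
    thus ?thesis using w by simp
  qed
  have "cmod ((\<Sum>x<l. chi n a x * cnj (chi m b x)) / of_nat m) = cmod (\<Sum>x<l. cis (2*pi*u) ^ x) / real m"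
    by (simp add: p norm_divide)
  also have "\<dots> \<le> (1 / (2 * \<bar>u\<bar>)) / real m"
    using geo_bound[OF u2 u0] mpos by (intro divide_right_mono) auto
  also have "\<dots> = 1 / (2 * dist_mod m X)" using dX by simp
  finally show ?thesis by (simp add: X_def)
qed

lemma norm2sq_cong: "(\<And>x. x < m \<Longrightarrow> h x = h' x) \<Longrightarrow> norm2sq_Z m h = norm2sq_Z m h'"
  unfolding norm2sq_Z_def by (intro arg_cong2[where f="(/)"] sum.cong refl) auto

theorem proposition4p2:
  fixes m n :: nat and \<epsilon> :: real and \<Gamma> :: "nat set" and f :: "nat \<Rightarrow> complex"
  assumes "n > 0" and "m > 0" and "\<epsilon> > 0"
    and "\<Gamma> \<subseteq> {0..<n}"
    and "\<forall>x<n. f x = (\<Sum>\<alpha>\<in>\<Gamma>. fourier n f \<alpha> * chi n \<alpha> x)"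
  shows "let l = min n m;
             g = (\<lambda>x. if x < l then f x else 0);
             r = real (card \<Gamma>) * norm2sq_Z n f / (2 * \<epsilon>);
             \<Gamma>' = {\<beta> \<in> {0..<m}. \<exists>\<alpha>\<in>\<Gamma>.
                     dist_mod m (real m / real n * real \<alpha> - real \<beta>) \<le> r + 1}
         in norm2sq_Z m (\<lambda>x. g x - restrict_freq m \<Gamma>' g x) \<le> \<epsilon>"
proof -
  define l where "l = min n m"
  define g where "g = (\<lambda>x. if x < l then f x else 0)"
  define N where "N = norm2sq_Z n f"
  define r where "r = real (card \<Gamma>) * N / (2 * \<epsilon>)"
  define G2 where "G2 = {\<beta> \<in> {0..<m}. \<exists>\<alpha>\<in>\<Gamma>.
                     dist_mod m (real m / real n * real \<alpha> - real \<beta>) \<le> r + 1}"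
  define F where "F = fourier n f"
  define C where "C = (\<lambda>a b. (\<Sum>x<l. chi n a x * cnj (chi m b x)) / of_nat m)"
  define Bc where "Bc = {..<m} - G2"
  have finG: "finite \<Gamma>" using assms(4) finite_subset by blast
  have G2sub: "G2 \<subseteq> {..<m}" by (auto simp: G2_def)
  have Bcsub: "Bc \<subseteq> {0..<m}" by (auto simp: Bc_def)
  have lm: "l \<le> m" "l \<le> n" by (auto simp: l_def)
  have N0: "N \<ge> 0" unfolding N_def norm2sq_Z_def by (intro divide_nonneg_nonneg sum_nonneg) auto
  have r0: "r \<ge> 0" unfolding r_def using N0 assms(3) by simp
  have hres: "g x - restrict_freq m G2 g x = (\<Sum>b\<in>Bc. fourier m g b * chi m b x)" if "x < m" for x
  proof -
    have "g x = (\<Sum>b<m. fourier m g b * chi m b x)" by (rule inversion[OF assms(2) that])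
    also have "\<dots> = (\<Sum>b\<in>Bc. fourier m g b * chi m b x) + (\<Sum>b\<in>G2. fourier m g b * chi m b x)"
      unfolding Bc_def using G2sub by (intro sum.subset_diff) auto
    finally show ?thesis by (simp add: restrict_freq_def)
  qed
  have step3: "norm2sq_Z m (\<lambda>x. g x - restrict_freq m G2 g x) = (\<Sum>b\<in>Bc. (cmod (fourier m g b))^2)"
  proof -
    have "norm2sq_Z m (\<lambda>x. g x - restrict_freq m G2 g x) = norm2sq_Z m (\<lambda>x. \<Sum>b\<in>Bc. fourier m g b * chi m b x)"
      using hres by (rule norm2sq_cong)
    also have "\<dots> = (\<Sum>b\<in>Bc. (cmod (fourier m g b))^2)" by (rule parseval_sum[OF assms(2) Bcsub])
    finally show ?thesis .
  qed
  have ghat: "fourier m g b = (\<Sum>a\<in>\<Gamma>. F a * C a b)" for b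
  proof -
    have "(\<Sum>x<m. g x * cnj (chi m b x)) = (\<Sum>x<l. f x * cnj (chi m b x))"
      by (rule sum.mono_neutral_cong_right) (use lm in \<open>auto simp: g_def\<close>)
    also have "\<dots> = (\<Sum>x<l. \<Sum>a\<in>\<Gamma>. F a * (chi n a x * cnj (chi m b x)))"
    proof (intro sum.cong refl)
      fix x assume "x \<in> {..<l}"
      hence "x < n" using lm by auto
      hence "f x = (\<Sum>a\<in>\<Gamma>. F a * chi n a x)" using assms(5) by (simp add: F_def)
      thus "f x * cnj (chi m b x) = (\<Sum>a\<in>\<Gamma>. F a * (chi n a x * cnj (chi m b x)))"
        by (simp add: sum_distrib_right mult.assoc)
    qed
    also have "\<dots> = (\<Sum>a\<in>\<Gamma>. F a * (\<Sum>x<l. chi n a x * cnj (chi m b x)))"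
      by (subst sum.swap) (simp only: sum_distrib_left)
    finally have "(\<Sum>x<m. g x * cnj (chi m b x)) = (\<Sum>a\<in>\<Gamma>. F a * (\<Sum>x<l. chi n a x * cnj (chi m b x)))" .
    hence "fourier m g b = (\<Sum>a\<in>\<Gamma>. F a * (\<Sum>x<l. chi n a x * cnj (chi m b x))) / of_nat m"
      by (simp add: fourier_def inner_Z_def)
    also have "\<dots> = (\<Sum>a\<in>\<Gamma>. F a * ((\<Sum>x<l. chi n a x * cnj (chi m b x)) / of_nat m))"
    proof -
      have gen: "(\<Sum>a\<in>\<Gamma>. F a * S a) / c = (\<Sum>a\<in>\<Gamma>. F a * (S a / c))" for S :: "nat \<Rightarrow> complex" and c
        by (simp add: sum_divide_distrib)
      show ?thesis by (rule gen)
    qed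
    finally show ?thesis by (simp only: C_def)
  qed
  have cs: "(cmod (fourier m g b))^2 \<le> real (card \<Gamma>) * (\<Sum>a\<in>\<Gamma>. (cmod (F a))^2 * (cmod (C a b))^2)" for b
  proof -
    have "cmod (fourier m g b) \<le> (\<Sum>a\<in>\<Gamma>. cmod (F a) * cmod (C a b))"
      unfolding ghat using norm_sum[of "\<lambda>a. F a * C a b" \<Gamma>] by (simp add: norm_mult)
    hence "(cmod (fourier m g b))^2 \<le> (\<Sum>a\<in>\<Gamma>. cmod (F a) * cmod (C a b))^2"
      by (intro power_mono) auto
    also have "\<dots> \<le> (\<Sum>a\<in>\<Gamma>. (cmod (F a) * cmod (C a b))^2) * real (card \<Gamma>)"
      by (rule sum_squared_le_sum_of_squares)
    finally show ?thesis by (simp add: power_mult_distrib mult.commute)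
  qed
  have tailb: "(\<Sum>b\<in>Bc. (cmod (C a b))^2) \<le> 1 / (2*r + 1)" if aG: "a \<in> \<Gamma>" for a
  proof -
    define t where "t = real m / real n * real a"
    have far: "dist_mod m (t - real b) > r + 1" if "b \<in> Bc" for b
      using that aG unfolding Bc_def G2_def t_def by force
    have "(\<Sum>b\<in>Bc. (cmod (C a b))^2) \<le> (\<Sum>b\<in>Bc. 1/(4*(dist_mod m (t - real b))^2))"
    proof (intro sum_mono)
      fix b assume "b \<in> Bc"
      hence dpos: "dist_mod m (t - real b) > 0" using far r0 by force
      have "cmod (C a b) \<le> 1 / (2 * dist_mod m (t - real b))"
        unfolding C_def t_def by (rule coef_bound[OF assms(2,1)]) (use dpos t_def in simp)
      hence "(cmod (C a b))^2 \<le> (1 / (2 * dist_mod m (t - real b)))^2"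
        by (intro power_mono) auto
      thus "(cmod (C a b))^2 \<le> 1/(4*(dist_mod m (t - real b))^2)"
        by (simp add: power_divide power_mult_distrib)
    qed
    also have "\<dots> \<le> 1/(2*(r+1) - 1)"
      by (rule beta_sum[OF assms(2) _ Bcsub]) (use r0 far in auto)
    finally show ?thesis by (simp add: algebra_simps)
  qed
  have parsF: "(\<Sum>a\<in>\<Gamma>. (cmod (F a))^2) = N"
  proof -
    have "N = norm2sq_Z n (\<lambda>x. \<Sum>a\<in>\<Gamma>. F a * chi n a x)"
      unfolding N_def F_def using assms(5) by (intro norm2sq_cong) auto
    also have "\<dots> = (\<Sum>a\<in>\<Gamma>. (cmod (F a))^2)"
      using assms(4) by (intro parseval_sum[OF assms(1)])
    finally show ?thesis by simp
  qed
  have "norm2sq_Z m (\<lambda>x. g x - restrict_freq m G2 g x)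
        \<le> (\<Sum>b\<in>Bc. real (card \<Gamma>) * (\<Sum>a\<in>\<Gamma>. (cmod (F a))^2 * (cmod (C a b))^2))"
    unfolding step3 by (intro sum_mono cs)
  also have "\<dots> = real (card \<Gamma>) * (\<Sum>a\<in>\<Gamma>. (cmod (F a))^2 * (\<Sum>b\<in>Bc. (cmod (C a b))^2))"
    by (simp only: sum_distrib_left[symmetric]) (subst sum.swap, simp only: sum_distrib_left)
  also have "\<dots> \<le> real (card \<Gamma>) * (\<Sum>a\<in>\<Gamma>. (cmod (F a))^2 * (1 / (2*r + 1)))"
    by (intro mult_left_mono sum_mono tailb) auto
  also have "\<dots> = real (card \<Gamma>) * N / (2*r + 1)"
  proof -
    have "(\<Sum>a\<in>\<Gamma>. (cmod (F a))^2 * (1 / (2*r + 1))) = N * (1 / (2*r + 1))"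
      by (simp only: sum_distrib_right[symmetric] parsF)
    thus ?thesis by simp
  qed
  also have "\<dots> = 2 * \<epsilon> * r / (2*r + 1)" using assms(3) by (simp add: r_def)
  also have "\<dots> \<le> \<epsilon>"
    using assms(3) r0 by (simp add: divide_le_eq)
  finally have goal: "norm2sq_Z m (\<lambda>x. g x - restrict_freq m G2 g x) \<le> \<epsilon>" .
  show ?thesis unfolding Let_def using goal unfolding g_def l_def G2_def r_def N_def .
qed

end
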